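(* Let $n\ge2$, $\omega\in\mathbb{R}^n$, $k\in\mathbb{R}_{>0}^n$ satisfy (IC1) $\sum_\mu\omega_\mu=0$, (IC2) $\omega\ne0$, (IC3) $\left|\frac{\omega_1}{k_1}\right|\le\cdots\le\left|\frac{\omega_n}{k_n}\right|$. For $\sigma\in\{-1,+1\}^n$ let $f_\sigma(R)=-R+\frac1n\sum_{\mu=1}^n\sigma_\mu\sqrt{k_\mu^2R-\omega_\mu^2}$. Let $\sigma\in\{-1,+1\}^n$ and indices $\mu,\nu$ with $\sigma_\mu=+1$, $\sigma_\nu=-1$, and let $\sigma'$ agree with $\sigma$ except that $\sigma'_\mu=-1$ and $\sigma'_\nu=+1$. Suppose $$(k_\mu^2-k_\nu^2)\left(\frac{\omega_n}{k_n}\right)^2\ge\omega_\mu^2-\omega_\nu^2\quad\text{and}\quad(k_\mu^2-k_\nu^2)\left(\frac1n\sum_{\iota=1}^nk_\iota\right)^2\ge\omega_\mu^2-\omega_\nu^2.$$ If $f_\sigma$ has no positive roots, then $f_{\sigma'}$ has no positive roots.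
   Context: Square roots are nonnegative real square roots; a positive root of $f_\sigma$ is a real $R>0$ with $k_\mu^2R-\omega_\mu^2\ge0$ for all $\mu$ and $f_\sigma(R)=0$. *)

theory Defs
  imports "HOL-Analysis.Analysis"
begin

text \<open>Indices 1..n of the paper are represented by 0..<n; vectors are functions nat => real.\<close>

definition f_sig :: "nat \<Rightarrow> (nat \<Rightarrow> real) \<Rightarrow> (nat \<Rightarrow> real) \<Rightarrow> (nat \<Rightarrow> real) \<Rightarrow> real \<Rightarrow> real" where
  "f_sig n k \<omega> \<sigma> R = - R + (1 / real n) * (\<Sum>i<n. \<sigma> i * sqrt ((k i)^2 * R - (\<omega> i)^2))"

definition positive_root :: "nat \<Rightarrow> (nat \<Rightarrow> real) \<Rightarrow> (nat \<Rightarrow> real) \<Rightarrow> (nat \<Rightarrow> real) \<Rightarrow> real \<Rightarrow> bool" where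
  "positive_root n k \<omega> \<sigma> R \<longleftrightarrow> R > 0 \<and> (\<forall>i<n. (k i)^2 * R - (\<omega> i)^2 \<ge> 0) \<and> f_sig n k \<omega> \<sigma> R = 0"

end

theory Submission
  imports Defs
begin

lemma sum_bound:
  fixes n :: nat and \<omega> k s :: "nat \<Rightarrow> real"
  assumes kpos: "\<forall>i<n. k i > 0" and sg: "\<forall>i<n. s i = 1 \<or> s i = -1"
    and R: "R \<ge> 0" and dom: "\<forall>i<n. (k i)^2 * R - (\<omega> i)^2 \<ge> 0"
  shows "(\<Sum>i<n. s i * sqrt ((k i)^2 * R - (\<omega> i)^2)) \<le> (\<Sum>i<n. k i) * sqrt R"
proof -
  have "(\<Sum>i<n. s i * sqrt ((k i)^2 * R - (\<omega> i)^2)) \<le> (\<Sum>i<n. k i * sqrt R)"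
  proof (rule sum_mono)
    fix i assume "i \<in> {..<n}"
    hence i: "i < n" by simp
    have a: "sqrt ((k i)^2 * R - (\<omega> i)^2) \<le> sqrt ((k i)^2 * R)"
      by (rule real_sqrt_le_mono) simp
    have b: "sqrt ((k i)^2 * R) = k i * sqrt R"
      using kpos i by (simp add: real_sqrt_mult less_imp_le)
    have c: "s i * sqrt ((k i)^2 * R - (\<omega> i)^2) \<le> sqrt ((k i)^2 * R - (\<omega> i)^2)"
    proof -
      have "sqrt ((k i)^2 * R - (\<omega> i)^2) \<ge> 0" by (rule real_sqrt_ge_zero) (use dom i in auto)
      moreover have "s i = 1 \<or> s i = -1" using sg i by blast
      ultimately show ?thesis by auto
    qed
    show "s i * sqrt ((k i)^2 * R - (\<omega> i)^2) \<le> k i * sqrt R" using a b c by linarith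
  qed
  thus ?thesis by (simp add: sum_distrib_right)
qed

lemma f_neg:
  fixes n :: nat and \<omega> k s :: "nat \<Rightarrow> real"
  assumes n: "n > 0" and kpos: "\<forall>i<n. k i > 0" and sg: "\<forall>i<n. s i = 1 \<or> s i = -1"
    and R: "R \<ge> 0" and dom: "\<forall>i<n. (k i)^2 * R - (\<omega> i)^2 \<ge> 0"
    and big: "sqrt R > (1 / real n) * (\<Sum>i<n. k i)"
  shows "f_sig n k \<omega> s R < 0"
proof -
  let ?K = "(1 / real n) * (\<Sum>i<n. k i)"
  have "(1 / real n) * (\<Sum>i<n. s i * sqrt ((k i)^2 * R - (\<omega> i)^2)) \<le> (1 / real n) * ((\<Sum>i<n. k i) * sqrt R)"
    using sum_bound[OF kpos sg R dom] n by (intro mult_left_mono) auto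
  also have "\<dots> = ?K * sqrt R" by simp
  also have "\<dots> < sqrt R * sqrt R"
  proof (rule mult_strict_right_mono)
    show "?K < sqrt R" by (rule big)
    have "0 \<le> ?K" using kpos n by (intro mult_nonneg_nonneg sum_nonneg) (auto simp: less_imp_le)
    thus "0 < sqrt R" using big by linarith
  qed
  also have "\<dots> = R" using R by simp
  finally show ?thesis unfolding f_sig_def by simp
qed

theorem lemma3:
  fixes n :: nat and \<omega> k \<sigma> \<sigma>' :: "nat \<Rightarrow> real" and \<mu> \<nu> :: nat
  assumes n2: "n \<ge> 2"
    and kpos: "\<forall>i<n. k i > 0"
    and IC1: "(\<Sum>i<n. \<omega> i) = 0"
    and IC2: "\<exists>i<n. \<omega> i \<noteq> 0"
    and IC3: "\<forall>i j. i \<le> j \<and> j < n \<longrightarrow> \<bar>\<omega> i / k i\<bar> \<le> \<bar>\<omega> j / k j\<bar>"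
    and sig: "\<forall>i<n. \<sigma> i = 1 \<or> \<sigma> i = -1"
    and mu: "\<mu> < n" and nu: "\<nu> < n"
    and smu: "\<sigma> \<mu> = 1" and snu: "\<sigma> \<nu> = -1"
    and sig': "\<forall>i<n. \<sigma>' i = (if i = \<mu> then -1 else if i = \<nu> then 1 else \<sigma> i)"
    and H1: "((k \<mu>)^2 - (k \<nu>)^2) * (\<omega> (n-1) / k (n-1))^2 \<ge> (\<omega> \<mu>)^2 - (\<omega> \<nu>)^2"
    and H2: "((k \<mu>)^2 - (k \<nu>)^2) * ((1 / real n) * (\<Sum>i<n. k i))^2 \<ge> (\<omega> \<mu>)^2 - (\<omega> \<nu>)^2"
    and noroot: "\<not> (\<exists>R. positive_root n k \<omega> \<sigma> R)"
  shows "\<not> (\<exists>R. positive_root n k \<omega> \<sigma>' R)"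
proof
  assume "\<exists>R. positive_root n k \<omega> \<sigma>' R"
  then obtain R where Rp: "R > 0" and dom: "\<forall>i<n. (k i)^2 * R - (\<omega> i)^2 \<ge> 0"
    and f0: "f_sig n k \<omega> \<sigma>' R = 0" unfolding positive_root_def by blast
  let ?K = "(1 / real n) * (\<Sum>i<n. k i)"
  have npos: "n > 0" using n2 by simp
  have Kpos: "?K > 0" using kpos npos by (intro mult_pos_pos sum_pos) auto
  have sg': "\<forall>i<n. \<sigma>' i = 1 \<or> \<sigma>' i = -1" using sig' sig by auto
  have small: "sqrt R \<le> ?K"
  proof (rule ccontr)
    assume "\<not> sqrt R \<le> ?K"
    hence "f_sig n k \<omega> \<sigma>' R < 0" using f_neg[OF npos kpos sg' _ dom] Rp by simp
    thus False using f0 by simp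
  qed
  hence RK: "R \<le> ?K^2" using Rp
    by (metis less_eq_real_def power2_le_imp_le real_sqrt_ge_zero real_sqrt_le_iff real_sqrt_pow2 sqrt_le_D)
  have nm1: "n - 1 < n" using npos by simp
  have R0: "(\<omega> (n-1) / k (n-1))^2 \<le> R"
  proof -
    have kk: "(k (n-1))^2 > 0" using kpos nm1 by (metis less_numeral_extra(3) zero_less_power2)
    have "(\<omega> (n-1))^2 \<le> (k (n-1))^2 * R" using dom nm1 by auto
    thus ?thesis using kk by (simp add: power_divide divide_le_eq mult.commute)
  qed
  define a where "a = (k \<mu>)^2 - (k \<nu>)^2"
  have g: "a * R \<ge> (\<omega> \<mu>)^2 - (\<omega> \<nu>)^2"
  proof (cases "a \<ge> 0")
    case True
    have "a * (\<omega> (n-1) / k (n-1))^2 \<le> a * R" by (rule mult_left_mono[OF R0 True])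
    thus ?thesis using H1 unfolding a_def by linarith
  next
    case False
    have "a * ?K^2 \<le> a * R" using False RK by (intro mult_left_mono_neg) auto
    thus ?thesis using H2 unfolding a_def by linarith
  qed
  define s where "s i = sqrt ((k i)^2 * R - (\<omega> i)^2)" for i
  have snm: "s \<nu> \<le> s \<mu>" unfolding s_def using g unfolding a_def
    by (intro real_sqrt_le_mono) (simp add: algebra_simps)
  have "\<sigma> \<mu> \<noteq> \<sigma> \<nu>" using smu snu by simp
  hence mn: "\<mu> \<noteq> \<nu>" by metis
  have "(\<Sum>i<n. \<sigma>' i * s i) = (\<Sum>i<n. \<sigma> i * s i + ((if i = \<mu> then -2 * s \<mu> else 0) + (if i = \<nu> then 2 * s \<nu> else 0)))"
    by (rule sum.cong) (use sig' smu snu mn in auto)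
  also have "\<dots> = (\<Sum>i<n. \<sigma> i * s i) - 2 * s \<mu> + 2 * s \<nu>"
    using mu nu by (simp add: sum.distrib)
  finally have eq: "(\<Sum>i<n. \<sigma>' i * s i) = (\<Sum>i<n. \<sigma> i * s i) - 2 * s \<mu> + 2 * s \<nu>" .
  have fge: "f_sig n k \<omega> \<sigma> R \<ge> 0"
  proof -
    have "(\<Sum>i<n. \<sigma>' i * s i) \<le> (\<Sum>i<n. \<sigma> i * s i)" using eq snm by linarith
    hence "(1 / real n) * (\<Sum>i<n. \<sigma>' i * s i) \<le> (1 / real n) * (\<Sum>i<n. \<sigma> i * s i)"
      by (intro mult_left_mono) auto
    thus ?thesis using f0 unfolding f_sig_def s_def by linarith
  qed
  define B where "B = (?K + 1)^2"
  have RB: "R \<le> B" unfolding B_def using RK Kpos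
    by (smt (verit) power_mono)
  have domB: "\<forall>i<n. (k i)^2 * B - (\<omega> i)^2 \<ge> 0"
  proof (intro allI impI)
    fix i assume i: "i < n"
    have "(k i)^2 * R \<le> (k i)^2 * B" using RB by (intro mult_left_mono) auto
    thus "(k i)^2 * B - (\<omega> i)^2 \<ge> 0" using dom i by force
  qed
  have fB: "f_sig n k \<omega> \<sigma> B < 0"
    using f_neg[OF npos kpos sig _ domB] Kpos unfolding B_def by simp
  have cont: "\<forall>x. R \<le> x \<and> x \<le> B \<longrightarrow> isCont (f_sig n k \<omega> \<sigma>) x"
    unfolding f_sig_def[abs_def] by (intro allI impI continuous_intros)
  obtain x where x: "R \<le> x" "x \<le> B" "f_sig n k \<omega> \<sigma> x = 0"
    using IVT2[of "f_sig n k \<omega> \<sigma>" B 0 R] fB fge RB cont by auto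
  have "positive_root n k \<omega> \<sigma> x"
    unfolding positive_root_def
  proof (intro conjI allI impI)
    show "x > 0" using x Rp by simp
    show "f_sig n k \<omega> \<sigma> x = 0" by (rule x(3))
    fix i assume i: "i < n"
    have "(k i)^2 * R \<le> (k i)^2 * x" using x by (intro mult_left_mono) auto
    thus "(k i)^2 * x - (\<omega> i)^2 \<ge> 0" using dom i by force
  qed
  thus False using noroot by blast
qed

end
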